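(* Let $\lambda\in(0,1)$, $X=[0,1]^2$, $X_1=\{(x,y)\in X:y<x^2\}$, $X_2=\{(x,y)\in X:y>x^2\}$, $f_1(x,y)=\lambda(x,y)$ and $f_2(x,y)=\lambda(x,y)+(0,1-\lambda)$. Let $f:X\to X$ be any map with $f|_{X_i}=f_i$ for $i=1,2$. Then $L=\Omega=\{(0,0),(0,1)\}$ and $\Lambda=\overline{\{(0,1-\lambda^n):n\in\mathbb N\}}$.
   Context: Here $\Delta:=X\setminus(X_1\cup X_2)$ and $\tilde X:=\bigcap_{n\ge0}f^{-n}(X\setminus\Delta)$. For $x\in\tilde X$, $\omega(x)$ is the set of limits of $f^{n_k}(x)$ along divergent sequences $(n_k)$; $L:=\overline{\bigcup_{x\in\tilde X}\omega(x)}$. A point $x\in X$ is non-wandering if for every $\epsilon>0$ there is a divergent sequence $(n_k)$ with $f^{n_k}(B(x,\epsilon)\cap\tilde X)\cap B(x,\epsilon)\ne\emptyset$ for all $k$; $\Omega$ is the set of non-wandering points. With $F_i(A):=\overline{f(A\cap X_i)}$, atoms of generation $n$ are the sets $F_{i_n}\circ\cdots\circ F_{i_1}(X)$, $\Lambda_n$ is their union, and $\Lambda:=\bigcap_{n\ge1}\Lambda_n$. *)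

theory Defs
  imports "HOL-Analysis.Analysis"
begin

type_synonym pt = "real \<times> real"

definition Xsq :: "pt set" where
  "Xsq = {0..1} \<times> {0..1}"

definition Xpiece :: "nat \<Rightarrow> pt set" where
  "Xpiece i = (if i = 1 then {(x,y) \<in> Xsq. y < x^2} else {(x,y) \<in> Xsq. y > x^2})"

definition Delta :: "pt set" where
  "Delta = Xsq - (Xpiece 1 \<union> Xpiece 2)"

text \<open>tilde X = intersection over n of f^(-n)(X - Delta), preimages taken within X.\<close>
definition tildeX :: "(pt \<Rightarrow> pt) \<Rightarrow> pt set" where
  "tildeX f = {p \<in> Xsq. \<forall>n. (f ^^ n) p \<in> Xsq - Delta}"

definition omega_lim :: "(pt \<Rightarrow> pt) \<Rightarrow> pt \<Rightarrow> pt set" where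
  "omega_lim f p = {q. \<exists>n :: nat \<Rightarrow> nat. filterlim n at_top sequentially \<and>
                        ((\<lambda>k. (f ^^ n k) p) \<longlongrightarrow> q) sequentially}"

definition Lset :: "(pt \<Rightarrow> pt) \<Rightarrow> pt set" where
  "Lset f = closure (\<Union>p \<in> tildeX f. omega_lim f p)"

definition nonwandering :: "(pt \<Rightarrow> pt) \<Rightarrow> pt \<Rightarrow> bool" where
  "nonwandering f p \<longleftrightarrow> p \<in> Xsq \<and> (\<forall>e>0. \<exists>n :: nat \<Rightarrow> nat. filterlim n at_top sequentially \<and>
      (\<forall>k. (f ^^ n k) ` (ball p e \<inter> tildeX f) \<inter> ball p e \<noteq> {}))"

definition Omega :: "(pt \<Rightarrow> pt) \<Rightarrow> pt set" where
  "Omega f = {p. nonwandering f p}"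

definition Fmap :: "(pt \<Rightarrow> pt) \<Rightarrow> nat \<Rightarrow> pt set \<Rightarrow> pt set" where
  "Fmap f i A = closure (f ` (A \<inter> Xpiece i))"

text \<open>For a word [i1,...,in], atom = F_in o ... o F_i1 (X).\<close>
definition atom :: "(pt \<Rightarrow> pt) \<Rightarrow> nat list \<Rightarrow> pt set" where
  "atom f w = foldl (\<lambda>A i. Fmap f i A) Xsq w"

definition Lambda_n :: "(pt \<Rightarrow> pt) \<Rightarrow> nat \<Rightarrow> pt set" where
  "Lambda_n f n = \<Union>{atom f w | w. length w = n \<and> set w \<subseteq> {1,2}}"

definition Lambda_set :: "(pt \<Rightarrow> pt) \<Rightarrow> pt set" where
  "Lambda_set f = (\<Inter>n\<in>{1..}. Lambda_n f n)"

end

theory Submission imports Defs begin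

lemma X1_iff: "(x,y) \<in> Xpiece 1 \<longleftrightarrow> 0\<le>x \<and> x\<le>1 \<and> 0\<le>y \<and> y\<le>1 \<and> y < x^2"
  by (auto simp: Xpiece_def Xsq_def)
lemma X2_iff: "i \<noteq> 1 \<Longrightarrow> (x,y) \<in> Xpiece i \<longleftrightarrow> 0\<le>x \<and> x\<le>1 \<and> 0\<le>y \<and> y\<le>1 \<and> x^2 < y"
  by (auto simp: Xpiece_def Xsq_def)
lemma Xsq_iff: "(x,y) \<in> Xsq \<longleftrightarrow> 0\<le>x \<and> x\<le>1 \<and> 0\<le>y \<and> y\<le>1"
  by (auto simp: Xsq_def)
lemma Xpiece_Xsq: "Xpiece i \<subseteq> Xsq"
  by (auto simp: Xpiece_def)
lemma Xsq_Delta: "Xsq - Delta = Xpiece 1 \<union> Xpiece 2"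
  using Xpiece_Xsq by (auto simp: Delta_def)
lemma closed_Xsq: "closed Xsq"
  unfolding Xsq_def by (intro closed_Times) auto

locale P3 =
  fixes lam :: real and f :: "pt \<Rightarrow> pt"
  assumes lam0: "0 < lam" and lam1: "lam < 1"
    and fX: "f ` Xsq \<subseteq> Xsq"
    and f1': "\<forall>p \<in> Xpiece 1. f p = lam *\<^sub>R p"
    and f2': "\<forall>p \<in> Xpiece 2. f p = lam *\<^sub>R p + (0, 1 - lam)"
begin

lemma f1: "(x,y) \<in> Xpiece 1 \<Longrightarrow> f (x,y) = (lam*x, lam*y)"
  using f1' by auto
lemma f2: "i \<noteq> 1 \<Longrightarrow> (x,y) \<in> Xpiece i \<Longrightarrow> f (x,y) = (lam*x, lam*y + (1-lam))"
  using f2' by (auto simp: Xpiece_def)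

lemma X2_step: assumes "i \<noteq> 1" "(x,y) \<in> Xpiece i" shows "f (x,y) \<in> Xpiece 2"
proof -
  have h: "0\<le>x" "x\<le>1" "0\<le>y" "y\<le>1" "x^2 < y" using assms X2_iff by auto
  have "(1-lam)*(1-y) \<ge> 0" using h lam1 by (intro mult_nonneg_nonneg) auto
  then have a1: "lam*y + (1-lam) \<ge> y" by (simp add: algebra_simps)
  have "lam^2 \<le> 1" using lam0 lam1 by (intro power_le_one) auto
  then have "lam^2 * x^2 \<le> x^2" using mult_left_le_one_le[of "x^2" "lam^2"] by simp
  then have a2: "(lam*x)^2 < lam*y + (1-lam)" using a1 h by (simp add: power_mult_distrib)
  have a3: "lam * x \<le> 1" using h lam0 lam1 mult_le_one[of lam x] by simp
  have "lam*y \<le> lam*1" using h lam0 by (intro mult_left_mono) auto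
  then have a4: "lam*y + (1-lam) \<le> 1" by simp
  have a5: "0 \<le> lam*x" "0 \<le> lam*y + (1-lam)" using h lam0 lam1 by auto
  show ?thesis unfolding f2[OF assms] X2_iff[of 2, simplified] using a2 a3 a4 a5 by simp
qed

lemma X2_iter: assumes "(x,y) \<in> Xpiece 2"
  shows "(f^^j) (x,y) = (lam^j*x, 1 - lam^j*(1-y)) \<and> (f^^j) (x,y) \<in> Xpiece 2"
proof (induction j)
  case 0 then show ?case using assms by simp
next
  case (Suc j)
  then have e: "(f^^j) (x,y) = (lam^j*x, 1 - lam^j*(1-y))" and m: "(lam^j*x, 1 - lam^j*(1-y)) \<in> Xpiece 2" by auto
  show ?case using f2[OF _ m] X2_step[OF _ m] e by (simp add: algebra_simps)
qed

lemma fst_step: "p \<in> Xpiece 1 \<union> Xpiece 2 \<Longrightarrow> fst (f p) = lam * fst p"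
  by (cases p) (auto simp: f1 f2[of 2])

lemma tilde_in: "p \<in> tildeX f \<Longrightarrow> (f^^n) p \<in> Xpiece 1 \<union> Xpiece 2"
  unfolding tildeX_def using Xsq_Delta by auto

lemma tilde_fst: "p \<in> tildeX f \<Longrightarrow> fst ((f^^n) p) = lam^n * fst p"
  by (induction n) (auto simp: fst_step[OF tilde_in])

lemma lampow: "(\<lambda>n. lam^n) \<longlonglongrightarrow> 0"
  using lam0 lam1 by (intro LIMSEQ_power_zero) auto

lemma X2_lim: assumes "(a,b) \<in> Xpiece 2" shows "(\<lambda>n. (f^^n) (a,b)) \<longlonglongrightarrow> (0,1)"
proof -
  have "(\<lambda>n. (lam^n*a, 1 - lam^n*(1-b))) \<longlonglongrightarrow> (0*a, 1 - 0*(1-b))"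
    by (intro tendsto_intros lampow)
  then show ?thesis using X2_iter[OF assms] by simp
qed

lemma orbit_lim: assumes "p \<in> tildeX f"
  shows "(\<lambda>n. (f^^n) p) \<longlonglongrightarrow> (0,0) \<or> (\<lambda>n. (f^^n) p) \<longlonglongrightarrow> (0,1)"
proof (cases "\<exists>N. (f^^N) p \<in> Xpiece 2")
  case True
  then obtain N where N: "(f^^N) p \<in> Xpiece 2" by blast
  obtain a b where ab: "(f^^N) p = (a,b)" by (cases "(f^^N) p")
  have "(\<lambda>n. (f^^(n+N)) p) \<longlonglongrightarrow> (0,1)"
    using X2_lim[of a b] N ab by (simp add: funpow_add)
  then show ?thesis by (rule disjI2[OF LIMSEQ_offset])
next
  case False
  then have X1: "(f^^n) p \<in> Xpiece 1" for n using tilde_in[OF assms, of n] by auto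
  have e: "(f^^n) p = lam^n *\<^sub>R p" for n
  proof (induction n)
    case (Suc n)
    show ?case using f1' X1[of n] Suc by simp
  qed simp
  have "(\<lambda>n. lam^n *\<^sub>R p) \<longlonglongrightarrow> 0 *\<^sub>R p" by (intro tendsto_intros lampow)
  then show ?thesis using e by (simp add: zero_prod_def)
qed

lemma pt10_orbit: "(f^^n) (1,0) = (lam^n, 0) \<and> (lam^n, 0) \<in> Xpiece 1"
proof (induction n)
  case 0 then show ?case using X1_iff[of 1 0] by simp
next
  case (Suc n)
  have "0 < lam^Suc n" using lam0 by simp
  moreover have "lam^Suc n \<le> 1" using lam0 lam1 by (intro power_le_one) auto
  ultimately show ?case using Suc f1[of "lam^n" 0] X1_iff[of "lam*lam^n" 0] lam0 by simp
qed

lemma pt10: "(1,0) \<in> tildeX f"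
  unfolding tildeX_def using Xsq_Delta pt10_orbit by (auto simp: Xsq_iff)

lemma fix01: "(f^^n) (0,1) = (0,1)"
  using X2_iter[of 0 1 n] by (simp add: X2_iff)

lemma pt01: "(0,1) \<in> tildeX f"
  unfolding tildeX_def using Xsq_Delta fix01 by (auto simp: Xsq_iff X2_iff)

lemma L_part: "Lset f = {(0,0),(0,1)}"
proof -
  have "(\<Union>p \<in> tildeX f. omega_lim f p) = {(0,0),(0,1)}"
  proof (rule equalityI)
    show "(\<Union>p \<in> tildeX f. omega_lim f p) \<subseteq> {(0,0),(0,1)}"
    proof (rule subsetI)
      fix q assume "q \<in> (\<Union>p \<in> tildeX f. omega_lim f p)"
      then obtain p where p: "p \<in> tildeX f" and q: "q \<in> omega_lim f p" by blast
      then obtain n :: "nat \<Rightarrow> nat" where n: "filterlim n at_top sequentially"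
        and lim: "((\<lambda>k. (f ^^ n k) p) \<longlongrightarrow> q) sequentially" unfolding omega_lim_def by blast
      from orbit_lim[OF p] obtain r where r: "r \<in> {(0,0),(0,1)}" and rl: "(\<lambda>n. (f^^n) p) \<longlonglongrightarrow> r"
        by blast
      have "(\<lambda>k. (f ^^ n k) p) \<longlonglongrightarrow> r" using filterlim_compose[OF rl n] by (simp add: o_def)
      then have "q = r" using LIMSEQ_unique[OF lim] by blast
      then show "q \<in> {(0,0),(0,1)}" using r by blast
    qed
  next
    have id: "filterlim (\<lambda>k::nat. k) at_top sequentially" by (simp add: filterlim_ident)
    have "(\<lambda>n. (lam^n, 0::real)) \<longlonglongrightarrow> (0, 0)" by (intro tendsto_intros lampow)
    then have "(0,0) \<in> omega_lim f (1,0)" unfolding omega_lim_def using id pt10_orbit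
      by (intro CollectI exI[of _ "\<lambda>k. k"]) simp
    moreover have "(0,1) \<in> omega_lim f (0,1)" unfolding omega_lim_def using id fix01
      by (intro CollectI exI[of _ "\<lambda>k. k"]) simp
    ultimately show "{(0,0),(0,1)} \<subseteq> (\<Union>p \<in> tildeX f. omega_lim f p)" using pt10 pt01 by blast
  qed
  moreover have "closure {(0::real,0::real),(0,1)} = {(0,0),(0,1)}"
    by (rule closure_closed[OF finite_imp_closed]) simp
  ultimately show ?thesis unfolding Lset_def by simp
qed


lemma pt_orbit: assumes "0 < d" "d \<le> 1"
  shows "(f^^n) (d,0) = (lam^n*d, 0) \<and> (lam^n*d, 0) \<in> Xpiece 1"
proof (induction n)
  case 0 then show ?case using X1_iff[of d 0] assms by simp
next
  case (Suc n)
  have "0 < lam^Suc n * d" using lam0 assms by simp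
  moreover have "lam^Suc n \<le> 1" using lam0 lam1 by (intro power_le_one) auto
  then have "lam^Suc n * d \<le> 1" using assms mult_le_one[of "lam^Suc n" d] by simp
  ultimately show ?case using Suc f1[of "lam^n*d" 0] X1_iff[of "lam*(lam^n*d)" 0] lam0 assms
    by (simp add: mult.assoc)
qed

lemma ptd: "0 < d \<Longrightarrow> d \<le> 1 \<Longrightarrow> (d,0) \<in> tildeX f"
  unfolding tildeX_def using Xsq_Delta pt_orbit by (auto simp: Xsq_iff)

lemma wand:
  assumes e: "e > 0" and N: "\<And>n q. n \<ge> N \<Longrightarrow> q \<in> ball p e \<inter> tildeX f \<Longrightarrow> (f^^n) q \<notin> ball p e"
  shows "\<not> nonwandering f p"
proof
  assume "nonwandering f p"
  then obtain n :: "nat \<Rightarrow> nat" where n: "filterlim n at_top sequentially"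
    and ne: "\<And>k. (f ^^ n k) ` (ball p e \<inter> tildeX f) \<inter> ball p e \<noteq> {}"
    unfolding nonwandering_def using e by blast
  have "eventually (\<lambda>k. N \<le> n k) sequentially" using n by (simp add: filterlim_at_top)
  then obtain k where "N \<le> n k" by (auto simp: eventually_sequentially)
  then show False using ne[of k] N by blast
qed

lemma Omega_sup: "{(0,0),(0,1)} \<subseteq> Omega f"
proof -
  have id: "filterlim (\<lambda>k::nat. k) at_top sequentially" by (simp add: filterlim_ident)
  have "nonwandering f (0,0)" unfolding nonwandering_def
  proof (intro conjI allI impI)
    show "(0,0) \<in> Xsq" by (simp add: Xsq_iff)
    fix e :: real assume e: "e > 0"
    define d where "d = min (e/2) 1"
    have d: "0 < d" "d \<le> 1" "d < e" using e by (auto simp: d_def)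
    have "\<forall>k. (f ^^ k) ` (ball (0,0) e \<inter> tildeX f) \<inter> ball (0,0) e \<noteq> {}"
    proof
      fix k
      have "lam^k * d \<le> d" using d lam0 lam1 mult_left_le_one_le[of d "lam^k"] power_le_one[of lam k] by simp
      moreover have "0 \<le> lam^k * d" using d lam0 by simp
      ultimately have "\<bar>lam^k*d\<bar> < e" using d by linarith
      then have "(lam^k*d, 0) \<in> ball (0,0) e" using d by (simp add: dist_Pair_Pair)
      moreover have "(d,0) \<in> ball (0,0) e" using d by (simp add: dist_Pair_Pair)
      ultimately have m: "(d,0) \<in> ball (0,0) e \<inter> tildeX f" and m2: "(lam^k*d, 0) \<in> ball (0,0) e"
        using ptd[OF d(1,2)] by auto
      have "(f^^k) (d,0) \<in> (f^^k) ` (ball (0,0) e \<inter> tildeX f)" using m by (rule imageI)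
      then have "(lam^k*d,0) \<in> (f^^k) ` (ball (0,0) e \<inter> tildeX f) \<inter> ball (0,0) e"
        using m2 pt_orbit[OF d(1,2), of k] by simp
      then show "(f ^^ k) ` (ball (0,0) e \<inter> tildeX f) \<inter> ball (0,0) e \<noteq> {}" by blast
    qed
    then show "\<exists>n :: nat \<Rightarrow> nat. filterlim n at_top sequentially \<and>
      (\<forall>k. (f ^^ n k) ` (ball (0,0) e \<inter> tildeX f) \<inter> ball (0,0) e \<noteq> {})"
      using id by (intro exI[of _ "\<lambda>k. k"]) simp
  qed
  moreover have "nonwandering f (0,1)" unfolding nonwandering_def
  proof (intro conjI allI impI)
    show "(0,1) \<in> Xsq" by (simp add: Xsq_iff)
    fix e :: real assume e: "e > 0"
    have "\<forall>k. (f ^^ k) ` (ball (0,1) e \<inter> tildeX f) \<inter> ball (0,1) e \<noteq> {}"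
    proof
      fix k
      have m: "(0,1) \<in> ball (0,1) e \<inter> tildeX f" using e pt01 by simp
      have "(f^^k) (0,1) \<in> (f^^k) ` (ball (0,1) e \<inter> tildeX f)" using m by (rule imageI)
      then have "(0,1) \<in> (f^^k) ` (ball (0,1) e \<inter> tildeX f) \<inter> ball (0,1) e"
        using m fix01[of k] by simp
      then show "(f ^^ k) ` (ball (0,1) e \<inter> tildeX f) \<inter> ball (0,1) e \<noteq> {}" by blast
    qed
    then show "\<exists>n :: nat \<Rightarrow> nat. filterlim n at_top sequentially \<and>
      (\<forall>k. (f ^^ n k) ` (ball (0,1) e \<inter> tildeX f) \<inter> ball (0,1) e \<noteq> {})"
      using id by (intro exI[of _ "\<lambda>k. k"]) simp
  qed
  ultimately show "{(0,0),(0,1)} \<subseteq> Omega f" by (simp add: Omega_def)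
qed

lemma Omega_sub: "Omega f \<subseteq> {(0,0),(0,1)}"
  proof (rule subsetI, rule ccontr)
    fix p assume pO: "p \<in> Omega f" and pn: "p \<notin> {(0,0),(0,1)}"
    obtain a b where p: "p = (a,b)" by (cases p)
    have pX: "0\<le>a" "a\<le>1" "0\<le>b" "b\<le>1" using pO p by (auto simp: Omega_def nonwandering_def Xsq_iff)
    have nw: "nonwandering f p" using pO by (simp add: Omega_def)
    show False
    proof (cases "a > 0")
      case True
      define e where "e = a/2"
      have e: "e > 0" using True by (simp add: e_def)
      obtain N where N: "lam^N < 1/3" using real_arch_pow_inv[of "1/3" lam] lam1 by auto
      have "(f^^n) q \<notin> ball p e" if n: "n \<ge> N" and q: "q \<in> ball p e \<inter> tildeX f" for n q
      proof
        assume fq: "(f^^n) q \<in> ball p e"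
        have "dist (fst p) (fst q) < e" using q dist_fst_le[of p q] by auto
        then have "\<bar>a - fst q\<bar> < a/2" using p by (simp add: e_def dist_real_def)
        then have q1: "fst q < 3*a/2" unfolding abs_less_iff by linarith
        have q0: "fst q \<ge> 0" using q by (cases q) (auto simp: tildeX_def Xsq_iff)
        have "lam^n \<le> lam^N" using n lam0 lam1 by (intro power_decreasing) auto
        then have "lam^n * fst q \<le> (1/3) * fst q" using N q0 by (intro mult_right_mono) auto
        then have "fst ((f^^n) q) < a/2" using tilde_fst[of q n] q q1 by auto
        moreover have "dist (fst p) (fst ((f^^n) q)) < e" using fq dist_fst_le[of p "(f^^n) q"] by auto
        then have "\<bar>a - fst ((f^^n) q)\<bar> < a/2" using p by (simp add: e_def dist_real_def)
        ultimately show False unfolding abs_less_iff by linarith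
      qed
      then show False using wand[OF e] nw by blast
    next
      case False
      then have a0: "a = 0" using pX by simp
      then have b: "0 < b" "b < 1" using pn p pX by auto
      define e where "e = min (b/2) ((1-b)/2)"
      have e: "e > 0" "e \<le> b/2" "e \<le> (1-b)/2" using b by (auto simp: e_def min_def)
      obtain N where N: "lam^N < (1-b)/2" using real_arch_pow_inv[of "(1-b)/2" lam] lam1 b by auto
      have "(f^^n) q \<notin> ball p e" if n: "n \<ge> N" and q: "q \<in> ball p e \<inter> tildeX f" for n q
      proof
        assume fq: "(f^^n) q \<in> ball p e"
        obtain x y where qxy: "q = (x,y)" by (cases q)
        have qX: "0\<le>x" "x\<le>1" "0\<le>y" "y\<le>1" using q qxy by (auto simp: tildeX_def Xsq_iff)
        have "dist (fst p) (fst q) < e" using q dist_fst_le[of p q] by auto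
        then have "\<bar>0 - x\<bar> < e" using p a0 qxy by (simp add: dist_real_def)
        then have x: "x < e" unfolding abs_less_iff by linarith
        have "dist (snd p) (snd q) < e" using q dist_snd_le[of p q] by auto
        then have "\<bar>b - y\<bar> < e" using p qxy by (simp add: dist_real_def)
        then have y: "y > b - e" unfolding abs_less_iff by linarith
        have "x^2 \<le> x" using qX by (simp add: power2_eq_square mult_left_le_one_le)
        then have "x^2 < y" using x y e by simp
        then have q2: "(x,y) \<in> Xpiece 2" using qX by (simp add: X2_iff)
        have "lam^n \<le> lam^N" using n lam0 lam1 by (intro power_decreasing) auto
        moreover have "lam^n * (1-y) \<le> lam^n" using qX lam0 mult_left_le[of "1-y" "lam^n"] by simp
        ultimately have "1 - lam^n*(1-y) > (1+b)/2" using N by simp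
        then have "snd ((f^^n) q) > (1+b)/2" using X2_iter[OF q2, of n] qxy by simp
        moreover have "dist (snd p) (snd ((f^^n) q)) < e" using fq dist_snd_le[of p "(f^^n) q"] by auto
        then have "\<bar>b - snd ((f^^n) q)\<bar> < e" using p by (simp add: dist_real_def)
        then have "snd ((f^^n) q) - b < e" by linarith
        then have "snd ((f^^n) q) < (1+b)/2" using e(3) by (simp add: field_simps)
        ultimately show False by linarith
      qed
      then show False using wand[OF e(1)] nw by blast
    qed
  qed

lemma Omega_part: "Omega f = {(0,0),(0,1)}"
  using Omega_sub Omega_sup by blast


lemma Xpiece_cases: "Xpiece i = Xpiece 1 \<or> Xpiece i = Xpiece 2"
  by (auto simp: Xpiece_def)

lemma atom_snoc: "atom f (w @ [i]) = Fmap f i (atom f w)"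
  by (simp add: atom_def)

lemma atom_closed: "closed (atom f w)"
proof (induction w rule: rev_induct)
  case Nil then show ?case by (simp add: atom_def closed_Xsq)
next
  case (snoc i w) then show ?case by (simp add: atom_snoc Fmap_def)
qed

lemma atom_Xsq: "atom f w \<subseteq> Xsq"
proof (induction w rule: rev_induct)
  case Nil then show ?case by (simp add: atom_def)
next
  case (snoc i w)
  have "f ` (atom f w \<inter> Xpiece i) \<subseteq> f ` Xsq" using Xpiece_Xsq[of i] by (intro image_mono) blast
  then have "f ` (atom f w \<inter> Xpiece i) \<subseteq> Xsq" using fX by (rule order_trans)
  then show ?case unfolding atom_snoc Fmap_def by (rule closure_minimal) (rule closed_Xsq)
qed

lemma atom_fst: "atom f w \<subseteq> {p. fst p \<le> lam ^ length w}"
proof (induction w rule: rev_induct)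
  case Nil then show ?case by (auto simp: atom_def Xsq_def)
next
  case (snoc i w)
  have "f ` (atom f w \<inter> Xpiece i) \<subseteq> {p. fst p \<le> lam ^ length (w @ [i])}"
  proof
    fix z assume "z \<in> f ` (atom f w \<inter> Xpiece i)"
    then obtain r where r: "r \<in> atom f w" "r \<in> Xpiece i" and z: "z = f r" by blast
    have "fst z = lam * fst r" using fst_step[of r] r(2) Xpiece_cases[of i] z by auto
    moreover have "fst r \<le> lam ^ length w" using r(1) snoc by auto
    ultimately show "z \<in> {p. fst p \<le> lam ^ length (w @ [i])}" using lam0 by simp
  qed
  moreover have "closed {p :: pt. fst p \<le> lam ^ length (w @ [i])}"
    by (intro closed_Collect_le continuous_intros)
  ultimately show ?case unfolding atom_snoc Fmap_def by (rule closure_minimal)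
qed

definition Tset :: "nat \<Rightarrow> real set" where
  "Tset n = {1 - lam^k | k. k < n} \<union> {1 - lam^n .. 1}"

lemma atom_slice: "(0,y) \<in> atom f w \<Longrightarrow> y \<in> Tset (length w)"
proof (induction w arbitrary: y rule: rev_induct)
  case Nil then show ?case by (simp add: atom_def Xsq_def Tset_def)
next
  case (snoc i w)
  have y0: "0 \<le> y" using snoc.prems atom_Xsq[of "w@[i]"] by (auto simp: Xsq_iff)
  show ?case
  proof (cases "i = 1")
    case True
    have "f ` (atom f w \<inter> Xpiece i) \<subseteq> {p. lam * snd p \<le> (fst p)^2}"
    proof
      fix z assume "z \<in> f ` (atom f w \<inter> Xpiece i)"
      then obtain r where r0: "r \<in> Xpiece 1" and z0: "z = f r" using True by blast
      obtain x y where "r = (x,y)" by (cases r)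
      then have r: "(x,y) \<in> Xpiece 1" and z: "z = f (x,y)" using r0 z0 by auto
      have "y \<le> x^2" using r X1_iff[of x y] by auto
      then have "lam^2 * y \<le> lam^2 * x^2" using lam0 by (intro mult_left_mono) auto
      then show "z \<in> {p. lam * snd p \<le> (fst p)^2}" using z f1[OF r]
        by (simp add: power2_eq_square algebra_simps)
    qed
    moreover have "closed {p :: pt. lam * snd p \<le> (fst p)^2}"
      by (intro closed_Collect_le continuous_intros)
    ultimately have "atom f (w@[i]) \<subseteq> {p. lam * snd p \<le> (fst p)^2}"
      unfolding atom_snoc Fmap_def by (rule closure_minimal)
    then have "lam * y \<le> 0" using snoc.prems by auto
    then have "y = 0" using y0 lam0 by (simp add: mult_le_0_iff)
    then have "y \<in> {1 - lam^k | k. k < length (w@[i])}" by (intro CollectI exI[of _ 0]) simp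
    then show ?thesis unfolding Tset_def by (rule UnI1)
  next
    case False
    define g where "g = (\<lambda>p::pt. (fst p / lam, (snd p - (1 - lam)) / lam))"
    have "f ` (atom f w \<inter> Xpiece i) \<subseteq> g -` atom f w"
    proof
      fix z assume "z \<in> f ` (atom f w \<inter> Xpiece i)"
      then obtain r where r0: "r \<in> Xpiece i" "r \<in> atom f w" and z0: "z = f r" by blast
      obtain x y where "r = (x,y)" by (cases r)
      then have r: "(x,y) \<in> Xpiece i" "(x,y) \<in> atom f w" and z: "z = f (x,y)" using r0 z0 by auto
      have "g z = (x,y)" using z f2[OF False r(1)] lam0 by (simp add: g_def)
      then show "z \<in> g -` atom f w" using r(2) by simp
    qed
    moreover have "closed (g -` atom f w)" unfolding g_def
      by (intro closed_vimage atom_closed continuous_intros) (use lam0 in auto)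
    ultimately have "atom f (w@[i]) \<subseteq> g -` atom f w"
      unfolding atom_snoc Fmap_def by (rule closure_minimal)
    then have "g (0,y) \<in> atom f w" using snoc.prems by auto
    then have "(0, (y - (1-lam))/lam) \<in> atom f w" by (simp add: g_def)
    then have yT: "(y - (1-lam))/lam \<in> Tset (length w)" by (rule snoc.IH)
    have ye: "y = lam * ((y - (1-lam))/lam) + (1 - lam)" using lam0 by simp
    show ?thesis
    proof (cases "(y - (1-lam))/lam \<in> {1 - lam^k | k. k < length w}")
      case True
      then obtain k where k: "k < length w" "(y - (1-lam))/lam = 1 - lam^k" by auto
      have "y = lam * (1 - lam^k) + (1 - lam)" using ye unfolding k(2) .
      then have "y = 1 - lam^Suc k" by (simp add: algebra_simps)
      then have "y \<in> {1 - lam^k | k. k < length (w@[i])}" using k(1) by (intro CollectI exI[of _ "Suc k"]) simp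
      then show ?thesis unfolding Tset_def by (rule UnI1)
    next
      case False
      then have "(y - (1-lam))/lam \<in> {1 - lam^length w .. 1}" using yT False unfolding Tset_def by blast
      then have a: "1 - lam^length w \<le> (y - (1-lam))/lam" "(y - (1-lam))/lam \<le> 1" by auto
      have "lam * (1 - lam^length w) \<le> lam * ((y - (1-lam))/lam)" using a(1) lam0 by (intro mult_left_mono) auto
      then have b1: "1 - lam^Suc (length w) \<le> y" using ye by (simp add: algebra_simps)
      have "lam * ((y - (1-lam))/lam) \<le> lam * 1" using a(2) lam0 by (intro mult_left_mono) auto
      then have b2: "y \<le> 1" using ye by simp
      have "y \<in> {1 - lam^length (w@[i]) .. 1}" using b1 b2 by simp
      then show ?thesis unfolding Tset_def by (rule UnI2)
    qed
  qed
qed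


lemma orbit_atom:
  assumes "r \<in> Xsq"
  shows "(\<forall>j<length w. (f^^j) r \<in> Xpiece (w!j)) \<Longrightarrow> (f^^length w) r \<in> atom f w"
proof (induction w rule: rev_induct)
  case Nil then show ?case using assms by (simp add: atom_def)
next
  case (snoc i w)
  have "\<forall>j<length w. (f^^j) r \<in> Xpiece (w!j)"
  proof (intro allI impI)
    fix j assume "j < length w"
    then show "(f^^j) r \<in> Xpiece (w!j)" using snoc.prems[rule_format, of j] by (simp add: nth_append)
  qed
  then have a: "(f^^length w) r \<in> atom f w" by (rule snoc.IH)
  have b: "(f^^length w) r \<in> Xpiece i" using snoc.prems[rule_format, of "length w"] by simp
  have "f ((f^^length w) r) \<in> f ` (atom f w \<inter> Xpiece i)" using a b by (intro imageI IntI)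
  then have "f ((f^^length w) r) \<in> Fmap f i (atom f w)" unfolding Fmap_def by (rule subsetD[OF closure_subset])
  then show ?case by (simp add: atom_snoc)
qed

lemma Lambda_n_eq: "Lambda_n f n = \<Union> (atom f ` {w. length w = n \<and> set w \<subseteq> {1,2}})"
  unfolding Lambda_n_def by (simp add: setcompr_eq_image)

lemma closed_Lambda: "closed (Lambda_set f)"
proof -
  have "closed (Lambda_n f n)" for n
  proof -
    have fin: "finite {w. length w = n \<and> set w \<subseteq> {1,2::nat}}"
      using finite_lists_length_eq[of "{1,2::nat}" n] by (simp add: conj_commute)
    show ?thesis unfolding Lambda_n_eq
      by (rule closed_Union) (use fin atom_closed in auto)
  qed
  then show ?thesis unfolding Lambda_set_def by (intro closed_INT) auto
qed

lemma c_facts: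
  defines "c \<equiv> (1+lam)/(2*lam)"
  shows "1 < c" "c * lam < 1" "c * lam^2 \<le> 1" "0 < c"
proof -
  have l: "c * lam = (1+lam)/2" using lam0 by (simp add: c_def)
  show "c * lam < 1" using l lam1 by simp
  show "1 < c" using lam0 lam1 by (simp add: c_def field_simps)
  then show "0 < c" by simp
  have "c * lam^2 = ((1+lam)/2) * lam" using l by (simp add: power2_eq_square)
  also have "\<dots> \<le> 1 * 1" using lam0 lam1 by (intro mult_mono) auto
  finally show "c * lam^2 \<le> 1" by simp
qed

lemma X1_mem:
  defines "c \<equiv> (1+lam)/(2*lam)"
  assumes j: "j < m" and u: "0 < u" "u \<le> lam"
  shows "(lam^j*u, lam^j*(c*lam^m*u^2)) \<in> Xpiece 1"
proof -
  note cf = c_facts[folded c_def]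
  obtain m' where m': "m = Suc m'" using j by (cases m) auto
  have lj: "0 < lam^j" "lam^j \<le> 1" using lam0 lam1 by (auto intro: power_le_one)
  have lm: "0 < lam^m" "lam^m \<le> 1" using lam0 lam1 by (auto intro: power_le_one)
  have s2: "0 < u^2" "u^2 \<le> lam^2" using u by (auto intro: power_mono)
  have y0: "0 \<le> c*lam^m*u^2" using cf lm s2 by simp
  have "c*lam^m \<le> c" using cf lm mult_left_le[of "lam^m" c] by simp
  then have "c*lam^m*u^2 \<le> c*u^2" using s2 by (intro mult_right_mono) auto
  also have "\<dots> \<le> c*lam^2" using cf s2 by (intro mult_left_mono) auto
  also have "\<dots> \<le> 1" using cf by simp
  finally have y1: "c*lam^m*u^2 \<le> 1" .
  have "c*lam^m = (c*lam)*lam^m'" using m' by simp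
  also have "\<dots> < 1 * lam^m'" using cf lam0 by (intro mult_strict_right_mono) auto
  also have "\<dots> \<le> lam^j" using j m' lam0 lam1 by (simp add: power_decreasing)
  finally have key: "c*lam^m < lam^j" .
  have "c*lam^m*u^2 < lam^j*u^2" using key s2 by (intro mult_strict_right_mono) auto
  then have "lam^j*(c*lam^m*u^2) < lam^j*(lam^j*u^2)" using lj by (intro mult_strict_left_mono) auto
  then have st: "lam^j*(c*lam^m*u^2) < (lam^j*u)^2" by (simp add: power2_eq_square algebra_simps)
  have b1: "0 \<le> lam^j*u" "lam^j*u \<le> 1" using lj u lam1 mult_le_one[of "lam^j" u] by auto
  have b2: "0 \<le> lam^j*(c*lam^m*u^2)" "lam^j*(c*lam^m*u^2) \<le> 1"
    using lj y0 y1 mult_le_one[of "lam^j" "c*lam^m*u^2"] by auto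
  show ?thesis using X1_iff[of "lam^j*u" "lam^j*(c*lam^m*u^2)"] st b1 b2 by simp
qed

lemma X2_mem:
  defines "c \<equiv> (1+lam)/(2*lam)"
  assumes u: "0 < u" "u \<le> lam"
  shows "(lam^m*u, lam^m*(c*lam^m*u^2)) \<in> Xpiece 2"
proof -
  note cf = c_facts[folded c_def]
  have lm: "0 < lam^m" "lam^m \<le> 1" using lam0 lam1 by (auto intro: power_le_one)
  have s2: "0 < u^2" "u^2 \<le> lam^2" using u by (auto intro: power_mono)
  have y0: "0 \<le> c*lam^m*u^2" using cf lm s2 by simp
  have "c*lam^m \<le> c" using cf lm mult_left_le[of "lam^m" c] by simp
  then have "c*lam^m*u^2 \<le> c*u^2" using s2 by (intro mult_right_mono) auto
  also have "\<dots> \<le> c*lam^2" using cf s2 by (intro mult_left_mono) auto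
  also have "\<dots> \<le> 1" using cf by simp
  finally have y1: "c*lam^m*u^2 \<le> 1" .
  have "lam^m*u^2 < lam^m*u^2*c" using cf lm s2 by simp
  then have "lam^m*(lam^m*u^2) < lam^m*(c*lam^m*u^2)" using lm by (intro mult_strict_left_mono) (auto simp: algebra_simps)
  then have st: "(lam^m*u)^2 < lam^m*(c*lam^m*u^2)" by (simp add: power2_eq_square algebra_simps)
  have b1: "0 \<le> lam^m*u" "lam^m*u \<le> 1" using lm u lam1 mult_le_one[of "lam^m" u] by auto
  have b2: "0 \<le> lam^m*(c*lam^m*u^2)" "lam^m*(c*lam^m*u^2) \<le> 1"
    using lm y0 y1 mult_le_one[of "lam^m" "c*lam^m*u^2"] by auto
  show ?thesis using X2_iff[of 2 "lam^m*u" "lam^m*(c*lam^m*u^2)"] st b1 b2 by simp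
qed

lemma X1_run:
  defines "c \<equiv> (1+lam)/(2*lam)"
  assumes u: "0 < u" "u \<le> lam"
  shows "j \<le> m \<Longrightarrow> (f^^j) (u, c*lam^m*u^2) = (lam^j*u, lam^j*(c*lam^m*u^2))"
proof (induction j)
  case 0 then show ?case by simp
next
  case (Suc j)
  then have e: "(f^^j) (u, c*lam^m*u^2) = (lam^j*u, lam^j*(c*lam^m*u^2))" by simp
  have "(lam^j*u, lam^j*(c*lam^m*u^2)) \<in> Xpiece 1" using X1_mem[OF _ u, of j m] Suc.prems by (simp add: c_def)
  then show ?case using e f1 by (simp add: algebra_simps)
qed


lemma pt_in_atoms:
  assumes n: "n \<ge> 1"
  shows "\<exists>w. length w = n \<and> set w \<subseteq> {1,2} \<and> (0, 1 - lam^k) \<in> atom f w"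
proof (cases "k > n")
  case True
  define w where "w = replicate n (2::nat)"
  define r where "r = ((0::real), 1 - lam^(k-n))"
  have "lam^(k-n) \<le> lam^1" using True lam0 lam1 by (intro power_decreasing) auto
  then have lk: "lam^(k-n) < 1" "0 < lam^(k-n)" using lam0 lam1 by auto
  have r2: "r \<in> Xpiece 2" using lk X2_iff[of 2 0 "1 - lam^(k-n)"] by (simp add: r_def)
  have rX: "r \<in> Xsq" using r2 Xpiece_Xsq by blast
  have "(f^^j) r \<in> Xpiece 2" for j using X2_iter[of 0 "1 - lam^(k-n)" j] r2 unfolding r_def by blast
  then have orb: "\<forall>j<length w. (f^^j) r \<in> Xpiece (w!j)" by (simp add: w_def)
  have "(f^^n) r = (0, 1 - lam^n * lam^(k-n))" using X2_iter[of 0 "1 - lam^(k-n)" n] r2 by (simp add: r_def)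
  also have "lam^n * lam^(k-n) = lam^k" using True by (simp add: power_add[symmetric])
  finally have "(0, 1 - lam^k) \<in> atom f w" using orbit_atom[OF rX orb] by (simp add: w_def)
  then show ?thesis by (intro exI[of _ w]) (auto simp: w_def)
next
  case False
  define m where "m = n - k"
  define w where "w = replicate m (1::nat) @ replicate k 2"
  have lw: "length w = n" using False by (simp add: w_def m_def)
  have sw: "set w \<subseteq> {1,2}" by (auto simp: w_def)
  define c where "c = (1+lam)/(2*lam)"
  have A: "(f^^n) (u, c*lam^m*u^2) \<in> atom f w \<and>
           (f^^n) (u, c*lam^m*u^2) = (lam^k*(lam^m*u), 1 - lam^k*(1 - lam^m*(c*lam^m*u^2)))"
    if u: "0 < u" "u \<le> lam" for u
  proof -
    define r where "r = (u, c*lam^m*u^2)"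
    define q where "q = (lam^m*u, lam^m*(c*lam^m*u^2))"
    have q2: "q \<in> Xpiece 2" using X2_mem[OF u, of m] by (simp add: q_def c_def)
    have fm: "(f^^m) r = q" using X1_run[OF u, of m m] by (simp add: r_def q_def c_def)
    have rX: "r \<in> Xsq"
    proof (cases "m = 0")
      case True then show ?thesis using fm q2 Xpiece_Xsq by auto
    next
      case False
      then have "(lam^0*u, lam^0*(c*lam^m*u^2)) \<in> Xpiece 1" using X1_mem[OF _ u, of 0 m] by (simp add: c_def)
      then show ?thesis using Xpiece_Xsq by (auto simp: r_def)
    qed
    have orb: "\<forall>j<length w. (f^^j) r \<in> Xpiece (w!j)"
    proof (intro allI impI)
      fix j assume j: "j < length w"
      show "(f^^j) r \<in> Xpiece (w!j)"
      proof (cases "j < m")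
        case True
        have "(f^^j) r = (lam^j*u, lam^j*(c*lam^m*u^2))" using X1_run[OF u, of j m] True by (simp add: r_def c_def)
        moreover have "(lam^j*u, lam^j*(c*lam^m*u^2)) \<in> Xpiece 1" using X1_mem[OF True u] by (simp add: c_def)
        moreover have "w!j = 1" using True by (simp add: w_def nth_append)
        ultimately show ?thesis by simp
      next
        case False
        obtain a b where qab: "q = (a,b)" by (cases q)
        have jd: "j = (j-m)+m" using False by simp
        have "(f^^j) r = (f^^((j-m)+m)) r" by (subst jd) (rule refl)
        also have "\<dots> = (f^^(j-m)) ((f^^m) r)" by (simp only: funpow_add comp_apply)
        finally have "(f^^j) r = (f^^(j-m)) ((f^^m) r)" .
        moreover have "(f^^(j-m)) q \<in> Xpiece 2" using X2_iter[of a b "j-m"] q2 qab by blast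
        ultimately have "(f^^j) r \<in> Xpiece 2" using fm by simp
        moreover have "w!j = 2" using False j by (simp add: w_def nth_append)
        ultimately show ?thesis by simp
      qed
    qed
    have nd: "n = k+m" using False by (simp add: m_def)
    have "(f^^n) r = (f^^(k+m)) r" by (subst nd) (rule refl)
    also have "\<dots> = (f^^k) ((f^^m) r)" by (simp only: funpow_add comp_apply)
    finally have "(f^^n) r = (f^^k) ((f^^m) r)" .
    then have e: "(f^^n) r = (lam^k*(lam^m*u), 1 - lam^k*(1 - lam^m*(c*lam^m*u^2)))"
      using fm q2 X2_iter[of "lam^m*u" "lam^m*(c*lam^m*u^2)" k] by (simp add: q_def)
    have "(f^^n) r \<in> atom f w" using orbit_atom[OF rX orb] lw by simp
    then show ?thesis using e by (simp add: r_def)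
  qed
  define U where "U = (\<lambda>t::nat. lam^Suc t)"
  have U: "0 < U t" "U t \<le> lam" for t
    using lam0 lam1 by (auto simp: U_def intro: mult_left_le power_le_one)
  have UL: "U \<longlonglongrightarrow> 0" unfolding U_def by (rule LIMSEQ_Suc[OF lampow])
  have "(\<lambda>t. (lam^k*(lam^m*U t), 1 - lam^k*(1 - lam^m*(c*lam^m*(U t)^2))))
        \<longlonglongrightarrow> (lam^k*(lam^m*0), 1 - lam^k*(1 - lam^m*(c*lam^m*0^2)))"
    by (intro tendsto_intros UL)
  then have "(\<lambda>t. (f^^n) (U t, c*lam^m*(U t)^2)) \<longlonglongrightarrow> (0, 1 - lam^k)"
    using A[OF U] by simp
  then have "(0, 1 - lam^k) \<in> atom f w"
    using closed_sequentially[OF atom_closed, of "\<lambda>t. (f^^n) (U t, c*lam^m*(U t)^2)"] A[OF U] by blast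
  then show ?thesis using lw sw by blast
qed

lemma Lam_S01: "(0,1) \<in> closure {((0::real), 1 - lam ^ n) | n :: nat. True}"
proof -
  let ?S = "{((0::real), 1 - lam ^ n) | n :: nat. True}"
  have lim: "(\<lambda>n. (0::real, 1 - lam^n)) \<longlonglongrightarrow> (0, 1 - 0)" by (intro tendsto_intros lampow)
  have "\<And>n. (0::real, 1 - lam^n) \<in> ?S" by blast
  then have inS: "\<And>n. (0::real, 1 - lam^n) \<in> closure ?S" using closure_subset by blast
  show ?thesis using closed_sequentially[OF closed_closure inS lim] by simp
qed

lemma Lam_sub: "Lambda_set f \<subseteq> closure {((0::real), 1 - lam ^ n) | n :: nat. True}"
proof
  let ?S = "{((0::real), 1 - lam ^ n) | n :: nat. True}"
  note S01 = Lam_S01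
    fix p assume pL: "p \<in> Lambda_set f"
    have W: "\<exists>w. length w = n \<and> p \<in> atom f w" if n1: "n \<ge> 1" for n
    proof -
      have "p \<in> Lambda_n f n" using pL n1 unfolding Lambda_set_def by simp
      then obtain w where "w \<in> {w. length w = n \<and> set w \<subseteq> {1,2}}" "p \<in> atom f w"
        unfolding Lambda_n_eq by (rule UnionE) (auto simp only: image_iff)
      then show ?thesis by auto
    qed
    obtain w1 where "length w1 = 1" "p \<in> atom f w1" using W[of 1] by auto
    then have pX: "p \<in> Xsq" using atom_Xsq by blast
    have fle: "fst p \<le> lam^n" if n1: "n \<ge> 1" for n
    proof -
      obtain w where "length w = n" "p \<in> atom f w" using W[OF n1] by blast
      then show ?thesis using atom_fst[of w] by auto
    qed
    have f0: "fst p = 0"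
    proof (rule ccontr)
      assume "fst p \<noteq> 0"
      then have fp: "fst p > 0" using pX by (cases p) (auto simp: Xsq_iff)
      obtain N where N: "lam^N < fst p" using real_arch_pow_inv[OF fp lam1] by blast
      have "lam^Suc N \<le> lam^N" using lam0 lam1 by (intro power_decreasing) auto
      then show False using fle[of "Suc N"] N by simp
    qed
    obtain y where py: "p = (0,y)" using f0 by (cases p) auto
    have yT: "y \<in> Tset n" if n1: "n \<ge> 1" for n
    proof -
      obtain w where "length w = n" "p \<in> atom f w" using W[OF n1] by blast
      then show ?thesis using atom_slice[of y w] py by simp
    qed
    have y1: "y \<le> 1" using pX py by (simp add: Xsq_iff)
    show "p \<in> closure ?S"
    proof (cases "y = 1")
      case True then show ?thesis using S01 py by simp
    next
      case False
      then have y1': "0 < 1 - y" using y1 by simp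
      obtain N where N: "lam^N < 1 - y" using real_arch_pow_inv[OF y1' lam1] by blast
      have "lam^Suc N \<le> lam^N" using lam0 lam1 by (intro power_decreasing) auto
      then have "y \<notin> {1 - lam^Suc N .. 1}" using N by simp
      moreover have "y \<in> Tset (Suc N)" by (rule yT) simp
      ultimately have "y \<in> {1 - lam^k | k. k < Suc N}" unfolding Tset_def Un_iff by blast
      then obtain k where "y = 1 - lam^k" by blast
      then have "p \<in> ?S" using py by blast
      then show ?thesis by (rule subsetD[OF closure_subset])
    qed
  qed

lemma Lam_sup: "closure {((0::real), 1 - lam ^ n) | n :: nat. True} \<subseteq> Lambda_set f"
proof -
  let ?S = "{((0::real), 1 - lam ^ n) | n :: nat. True}"
  have "?S \<subseteq> Lambda_set f"
  proof
    fix p assume "p \<in> ?S"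
    then obtain k where pk: "p = (0, 1 - lam^k)" by blast
    have "p \<in> Lambda_n f n" if n1: "n \<in> {1..}" for n
    proof -
      obtain w where w: "length w = n" "set w \<subseteq> {1,2}" "(0, 1 - lam^k) \<in> atom f w"
        using pt_in_atoms[of n k] n1 by auto
      then have "w \<in> {w. length w = n \<and> set w \<subseteq> {1,2}}" by simp
      then show ?thesis unfolding Lambda_n_eq using w(3) pk by blast
    qed
    then show "p \<in> Lambda_set f" unfolding Lambda_set_def by blast
  qed
  then show ?thesis using closed_Lambda by (rule closure_minimal)
qed

lemma Lambda_part: "Lambda_set f = closure {(0, 1 - lam ^ n) | n :: nat. True}"
  using Lam_sub Lam_sup by (rule equalityI)

end


theorem proposition3:
  fixes lam :: real and f :: "pt \<Rightarrow> pt"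
  assumes "0 < lam" and "lam < 1"
    and "f ` Xsq \<subseteq> Xsq"
    and "\<forall>p \<in> Xpiece 1. f p = lam *\<^sub>R p"
    and "\<forall>p \<in> Xpiece 2. f p = lam *\<^sub>R p + (0, 1 - lam)"
  shows "Lset f = {(0,0), (0,1)} \<and> Omega f = {(0,0), (0,1)} \<and>
         Lambda_set f = closure {(0, 1 - lam ^ n) | n :: nat. True}"
proof -
  interpret P3 lam f using assms by unfold_locales
  show ?thesis using L_part Omega_part Lambda_part by blast
qed

end
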